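(* Let $k<l$ be positive integers and let $\gamma\in U(k,l)$ be diagonalizable with all eigenvalues of modulus $1$. Then $\gamma$ has an eigenvector in $N_-^{k,l}\cup N_+^{k,l}$.
   Context: $\prec u,v\succ_{k,l}=-\sum_{j=1}^k u_j\bar v_j+\sum_{j=k+1}^{k+l}u_j\bar v_j$ on $\mathbb{C}^{k+l}$; $N_-^{k,l}$, $N_+^{k,l}$ are the sets of vectors $v$ with $\prec v,v\succ_{k,l}<0$, respectively $>0$; $U(k,l)$ is the group of matrices in $GL(k+l,\mathbb{C})$ preserving the form. *)

theory Defs
  imports Complex_Main "Jordan_Normal_Form.Jordan_Normal_Form"
begin

definition hform :: "nat \<Rightarrow> nat \<Rightarrow> complex vec \<Rightarrow> complex vec \<Rightarrow> complex" where
  "hform k l u v = - (\<Sum>j<k. u $ j * cnj (v $ j)) + (\<Sum>j\<in>{k..<k+l}. u $ j * cnj (v $ j))"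

text \<open>hform k l v v is always real; its sign is read off via Re.\<close>
definition N_minus :: "nat \<Rightarrow> nat \<Rightarrow> complex vec set" where
  "N_minus k l = {v \<in> carrier_vec (k+l). Re (hform k l v v) < 0}"

definition N_plus :: "nat \<Rightarrow> nat \<Rightarrow> complex vec set" where
  "N_plus k l = {v \<in> carrier_vec (k+l). Re (hform k l v v) > 0}"

definition U_group :: "nat \<Rightarrow> nat \<Rightarrow> complex mat set" where
  "U_group k l = {g \<in> carrier_mat (k+l) (k+l). invertible_mat g \<and>
     (\<forall>u\<in>carrier_vec (k+l). \<forall>v\<in>carrier_vec (k+l).
        hform k l (g *\<^sub>v u) (g *\<^sub>v v) = hform k l u v)}"

definition diagonalizable_mat :: "complex mat \<Rightarrow> bool" where
  "diagonalizable_mat A = (\<exists>D. diagonal_mat D \<and> similar_mat A D)"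

end

theory Submission
  imports Defs
begin

definition sg :: "nat \<Rightarrow> nat \<Rightarrow> complex" where
  "sg k j = (if j < k then -1 else 1)"

lemma hform_alt: "hform k l u v = (\<Sum>j<k+l. sg k j * (u $ j * cnj (v $ j)))"
proof -
  have eq: "{..<k+l} = {..<k} \<union> {k..<k+l}" by auto
  have "(\<Sum>j<k+l. sg k j * (u $ j * cnj (v $ j))) =
     (\<Sum>j<k. sg k j * (u $ j * cnj (v $ j))) + (\<Sum>j\<in>{k..<k+l}. sg k j * (u $ j * cnj (v $ j)))"
    unfolding eq by (rule sum.union_disjoint) auto
  also have "\<dots> = hform k l u v"
    unfolding hform_def sg_def by (simp add: sum_negf)
  finally show ?thesis by simp
qed

lemma hform_add_left: "u \<in> carrier_vec (k+l) \<Longrightarrow> v \<in> carrier_vec (k+l) \<Longrightarrow>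
   hform k l (u + v) w = hform k l u w + hform k l v w"
  unfolding hform_alt by (simp add: sum.distrib[symmetric] algebra_simps)

lemma hform_add_right: "v \<in> carrier_vec (k+l) \<Longrightarrow> w \<in> carrier_vec (k+l) \<Longrightarrow>
   hform k l u (v + w) = hform k l u v + hform k l u w"
  unfolding hform_alt by (simp add: sum.distrib[symmetric] algebra_simps)

lemma hform_smult_left: "u \<in> carrier_vec (k+l) \<Longrightarrow>
   hform k l (a \<cdot>\<^sub>v u) w = a * hform k l u w"
  unfolding hform_alt by (simp add: sum_distrib_left algebra_simps)

lemma hform_smult_right: "v \<in> carrier_vec (k+l) \<Longrightarrow>
   hform k l u (a \<cdot>\<^sub>v v) = cnj a * hform k l u v"
  unfolding hform_alt by (simp add: sum_distrib_left algebra_simps)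

lemma hform_real: "Im (hform k l v v) = 0"
  unfolding hform_def by (simp add: Im_sum)

lemma hform_mult:
  assumes P: "P \<in> carrier_mat (k+l) (k+l)" and x: "x \<in> carrier_vec (k+l)" and y: "y \<in> carrier_vec (k+l)"
  shows "hform k l (P *\<^sub>v x) (P *\<^sub>v y) =
    (\<Sum>a<k+l. \<Sum>b<k+l. x $ a * cnj (y $ b) * hform k l (col P a) (col P b))"
proof -
  let ?n = "k+l"
  have e1: "\<And>j. j < ?n \<Longrightarrow> (P *\<^sub>v x) $ j = (\<Sum>a<?n. P $$ (j,a) * x $ a)"
    using P x by (auto simp: scalar_prod_def row_def lessThan_atLeast0)
  have e2: "\<And>j. j < ?n \<Longrightarrow> (P *\<^sub>v y) $ j = (\<Sum>a<?n. P $$ (j,a) * y $ a)"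
    using P y by (auto simp: scalar_prod_def row_def lessThan_atLeast0)
  have "hform k l (P *\<^sub>v x) (P *\<^sub>v y) =
     (\<Sum>j<?n. sg k j * ((\<Sum>a<?n. P $$ (j,a) * x $ a) * cnj (\<Sum>b<?n. P $$ (j,b) * y $ b)))"
    unfolding hform_alt by (rule sum.cong, auto simp: e1 e2)
  also have "\<dots> = (\<Sum>j<?n. \<Sum>b<?n. \<Sum>a<?n. x $ a * cnj (y $ b) * (sg k j * (P $$ (j,a) * cnj (P $$ (j,b)))))"
    apply (simp add: sum_distrib_left sum_distrib_right cnj_sum mult.assoc mult.left_commute)
    apply (intro sum.cong refl)
    apply (simp add: mult_ac)
    done
  also have "\<dots> = (\<Sum>j<?n. \<Sum>a<?n. \<Sum>b<?n. x $ a * cnj (y $ b) * (sg k j * (P $$ (j,a) * cnj (P $$ (j,b)))))"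
    by (rule sum.cong[OF refl], rule sum.swap)
  also have "\<dots> = (\<Sum>a<?n. \<Sum>j<?n. \<Sum>b<?n. x $ a * cnj (y $ b) * (sg k j * (P $$ (j,a) * cnj (P $$ (j,b)))))"
    by (rule sum.swap)
  also have "\<dots> = (\<Sum>a<?n. \<Sum>b<?n. \<Sum>j<?n. x $ a * cnj (y $ b) * (sg k j * (P $$ (j,a) * cnj (P $$ (j,b)))))"
    by (rule sum.cong[OF refl], rule sum.swap)
  also have "\<dots> = (\<Sum>a<?n. \<Sum>b<?n. x $ a * cnj (y $ b) * hform k l (col P a) (col P b))"
    unfolding hform_alt using P by (auto simp: sum_distrib_left intro!: sum.cong)
  finally show ?thesis .
qed

lemma hform_zero: "hform k l (0\<^sub>v (k+l)) (0\<^sub>v (k+l)) = 0"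
  unfolding hform_alt by simp

lemma col_eigen:
  fixes P Q D G :: "complex mat"
  assumes P: "P \<in> carrier_mat n n" and Q: "Q \<in> carrier_mat n n" and D: "D \<in> carrier_mat n n"
    and G: "G \<in> carrier_mat n n"
    and QP: "Q * P = 1\<^sub>m n" and GD: "G = P * D * Q" and dg: "diagonal_mat D" and a: "a < n"
  shows "G *\<^sub>v col P a = D $$ (a,a) \<cdot>\<^sub>v col P a" "col P a \<noteq> 0\<^sub>v n"
proof -
  have "G * P = (P * D) * (Q * P)"
    unfolding GD by (rule assoc_mult_mat[OF mult_carrier_mat[OF P D] Q P])
  also have "\<dots> = P * D" using QP right_mult_one_mat[OF mult_carrier_mat[OF P D]] by simp
  finally have "G * P = P * D" .
  hence "G *\<^sub>v col P a = P *\<^sub>v col D a"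
    using P G D a by (metis col_mult2)
  also have "col D a = D $$ (a,a) \<cdot>\<^sub>v unit_vec n a"
    using D a dg unfolding diagonal_mat_def by (intro eq_vecI) auto
  also have "P *\<^sub>v (D $$ (a,a) \<cdot>\<^sub>v unit_vec n a) = D $$ (a,a) \<cdot>\<^sub>v (P *\<^sub>v unit_vec n a)"
    using P by (intro mult_mat_vec) auto
  also have "P *\<^sub>v unit_vec n a = col P a"
    using col_mult2[of P n n "1\<^sub>m n" n a] P a by simp
  finally show "G *\<^sub>v col P a = D $$ (a,a) \<cdot>\<^sub>v col P a" .
  show "col P a \<noteq> 0\<^sub>v n"
  proof
    assume z: "col P a = 0\<^sub>v n"
    have "col (Q * P) a = Q *\<^sub>v col P a" using col_mult2[of Q n n P n a] P Q a by simp
    also have "\<dots> = 0\<^sub>v n" unfolding z using Q by (intro eq_vecI) auto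
    finally have "col (1\<^sub>m n :: complex mat) a = 0\<^sub>v n" unfolding QP .
    hence "col (1\<^sub>m n :: complex mat) a $ a = 0\<^sub>v n $ a" by simp
    thus False using a by simp
  qed
qed


lemma unit_hform: "k < k + l \<Longrightarrow> hform k l (unit_vec (k+l) k) (unit_vec (k+l) k) = 1"
proof -
  assume "k < k + l"
  have "hform k l (unit_vec (k+l) k) (unit_vec (k+l) k) = (\<Sum>j<k+l. if j = k then 1 else 0)"
    unfolding hform_alt
  proof (rule sum.cong[OF refl])
    fix j assume "j \<in> {..<k+l}"
    hence j: "j < k + l" by simp
    show "sg k j * (unit_vec (k+l) k $ j * cnj (unit_vec (k+l) k $ j)) = (if j = k then 1 else 0)"
      using j \<open>k < k + l\<close> by (cases "j = k") (simp_all add: sg_def)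
  qed
  also have "\<dots> = 1" using \<open>k < k + l\<close> by simp
  finally show ?thesis .
qed

theorem mainTheorem16:
  fixes k l :: nat and \<gamma> :: "complex mat"
  assumes "0 < k" and "k < l"
    and "\<gamma> \<in> U_group k l"
    and "diagonalizable_mat \<gamma>"
    and "\<forall>\<mu>. eigenvalue \<gamma> \<mu> \<longrightarrow> cmod \<mu> = 1"
  shows "\<exists>v \<mu>. eigenvector \<gamma> v \<mu> \<and> v \<in> N_minus k l \<union> N_plus k l"
proof (rule ccontr)
  assume H: "\<not> ?thesis"
  let ?n = "k + l"
  have G: "\<gamma> \<in> carrier_mat ?n ?n" and Gh: "\<And>u v. u \<in> carrier_vec ?n \<Longrightarrow> v \<in> carrier_vec ?n \<Longrightarrow>
        hform k l (\<gamma> *\<^sub>v u) (\<gamma> *\<^sub>v v) = hform k l u v"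
    using assms(3) unfolding U_group_def by blast+
  have drow: "dim_row \<gamma> = ?n" using G by simp
  have null: "hform k l w w = 0" if w: "w \<in> carrier_vec ?n" "\<gamma> *\<^sub>v w = lam \<cdot>\<^sub>v w" for w lam
  proof (cases "w = 0\<^sub>v ?n")
    case True thus ?thesis using hform_zero by simp
  next
    case False
    hence "eigenvector \<gamma> w lam" using w drow unfolding eigenvector_def by simp
    hence "w \<notin> N_minus k l \<union> N_plus k l" using H by blast
    hence "Re (hform k l w w) = 0" using w unfolding N_minus_def N_plus_def by auto
    thus ?thesis using hform_real[of k l w] by (simp add: complex_eq_iff)
  qed
  have orth: "hform k l u v = 0" if u: "u \<in> carrier_vec ?n" "\<gamma> *\<^sub>v u = lam \<cdot>\<^sub>v u" "u \<noteq> 0\<^sub>v ?n"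
    and v: "v \<in> carrier_vec ?n" "\<gamma> *\<^sub>v v = mu \<cdot>\<^sub>v v" "v \<noteq> 0\<^sub>v ?n" for u v lam mu
  proof (cases "lam = mu")
    case True
    have "\<gamma> *\<^sub>v (u + v) = lam \<cdot>\<^sub>v (u + v)"
      using u v G True by (simp add: mult_add_distrib_mat_vec smult_add_distrib_vec[of _ ?n])
    hence 1: "hform k l (u + v) (u + v) = 0" using null u v by simp
    have "\<gamma> *\<^sub>v (u + \<i> \<cdot>\<^sub>v v) = lam \<cdot>\<^sub>v (u + \<i> \<cdot>\<^sub>v v)"
      using u v G True by (simp add: mult_add_distrib_mat_vec smult_add_distrib_vec[of _ ?n]
          mult_mat_vec smult_smult_assoc mult.commute)
    hence 2: "hform k l (u + \<i> \<cdot>\<^sub>v v) (u + \<i> \<cdot>\<^sub>v v) = 0" using null u v by simp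
    have uu: "hform k l u u = 0" using null u by blast
    have vv: "hform k l v v = 0" using null v by blast
    from 1 have a: "hform k l u v + hform k l v u = 0"
      using u v uu vv by (simp add: hform_add_left hform_add_right add.commute)
    from 2 have b: "- \<i> * hform k l u v + \<i> * hform k l v u = 0"
      using u v uu vv by (simp add: hform_add_left hform_add_right hform_smult_left hform_smult_right
         algebra_simps)
    have q: "hform k l v u = - hform k l u v" using a by (simp add: eq_neg_iff_add_eq_0 add.commute)
    have "(2 * \<i>) * hform k l u v = 0" using b unfolding q by (simp add: algebra_simps)
    thus ?thesis by simp
  next
    case False
    have el: "eigenvalue \<gamma> lam" using u drow unfolding eigenvalue_def eigenvector_def by auto
    have em: "eigenvalue \<gamma> mu" using v drow unfolding eigenvalue_def eigenvector_def by auto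
    have nl: "cmod lam = 1" and nm: "cmod mu = 1" using el em assms(5) by auto
    have "hform k l u v = hform k l (\<gamma> *\<^sub>v u) (\<gamma> *\<^sub>v v)" using Gh[OF u(1) v(1)] by simp
    also have "\<dots> = hform k l (lam \<cdot>\<^sub>v u) (mu \<cdot>\<^sub>v v)" using u v by simp
    also have "\<dots> = lam * cnj mu * hform k l u v"
      using u v by (simp add: hform_smult_left hform_smult_right smult_carrier_vec)
    finally have e: "(1 - lam * cnj mu) * hform k l u v = 0" by (simp add: algebra_simps)
    have "mu * cnj mu = 1" using nm by (metis complex_norm_square mult.commute of_real_1 power_one)
    hence "lam * cnj mu \<noteq> 1" using False by (metis mult.assoc mult.commute mult.right_neutral)
    thus ?thesis using e by simp
  qed
  obtain D where dg: "diagonal_mat D" and sim: "similar_mat \<gamma> D"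
    using assms(4) unfolding diagonalizable_mat_def by auto
  from similar_matD[OF sim] obtain m P Q where
    C: "{\<gamma>, D, P, Q} \<subseteq> carrier_mat m m" and PQ: "P * Q = 1\<^sub>m m" and QP: "Q * P = 1\<^sub>m m"
    and GD: "\<gamma> = P * D * Q" by blast
  have m: "m = ?n" using C G by auto
  have P: "P \<in> carrier_mat ?n ?n" and Q: "Q \<in> carrier_mat ?n ?n" and D: "D \<in> carrier_mat ?n ?n"
    using C m by auto
  have cols: "hform k l (col P a) (col P b) = 0" if "a < ?n" "b < ?n" for a b
    using col_eigen[OF P Q D G QP[unfolded m] GD dg] that P
    by (intro orth[of _ "D $$ (a,a)" _ "D $$ (b,b)"]) auto
  define e :: "complex vec" where "e = unit_vec ?n k"
  have ec: "e \<in> carrier_vec ?n" unfolding e_def by simp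
  have "P *\<^sub>v (Q *\<^sub>v e) = e" using P Q ec PQ m by (metis assoc_mult_mat_vec one_mult_mat_vec)
  hence "hform k l e e = hform k l (P *\<^sub>v (Q *\<^sub>v e)) (P *\<^sub>v (Q *\<^sub>v e))" by simp
  also have "\<dots> = 0" using hform_mult[OF P, of "Q *\<^sub>v e" "Q *\<^sub>v e"] Q ec cols by simp
  finally show False using unit_hform[of k l] assms(2) unfolding e_def by simp
qed

end
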